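(* Let $n\geq 4$, let $e=[1,2,\dots,n]$ be the identity permutation, and let $\mathcal{S}(e,1)=\{\pi\in S_n: d_K(e,\pi)\leq 1\}$. Then the set $\mathcal{A}=\mathcal{S}(e,1)\cup \mathcal{S}(e,1)\circ(1,2)$ is an optimal anticode of diameter $3$ in $S_n$ with respect to the Kendall's $\tau$-distance, and $|\mathcal{A}|=2(n-1)$.
   Context: $S_n$ denotes the set of all permutations of $[n]=\{1,\dots,n\}$, written $\sigma=[\sigma(1),\dots,\sigma(n)]$. Composition is defined by $(\pi\circ\sigma)(i)=\sigma(\pi(i))$. $(1,2)$ denotes the permutation $[2,1,3,4,\dots,n]$, and for a set $\mathcal{S}\subseteq S_n$ and $\pi\in S_n$, $\mathcal{S}\circ\pi=\{\sigma\circ\pi:\sigma\in\mathcal{S}\}$; thus $\sigma\circ(1,2)$ is obtained from $\sigma$ by exchanging the values $1$ and $2$. An adjacent transposition applied to $\sigma$ exchanges the entries in positions $i$ and $i+1$ for some $1\leq i\leq n-1$. The Kendall's $\tau$-distance $d_K(\sigma,\pi)$ is the minimum number of adjacent transpositions needed to transform $\sigma$ into $\pi$. An anticode of diameter $D$ is a subset $\mathcal{A}\subseteq S_n$ with $d_K(x,y)\leq D$ for all $x,y\in\mathcal{A}$; it is optimal if it has the largest possible size among all anticodes of diameter $D$ in $S_n$. *)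

theory Defs
  imports "HOL-Combinatorics.Multiset_Permutations"
begin

text \<open>Permutations of [n] in one-line notation [sigma(1),...,sigma(n)], as lists.\<close>
definition Sn :: "nat \<Rightarrow> nat list set" where
  "Sn n = permutations_of_set {1..n}"

definition identity_perm :: "nat \<Rightarrow> nat list" where
  "identity_perm n = [1..<Suc n]"

definition adj_swap :: "nat list \<Rightarrow> nat \<Rightarrow> nat list" where
  "adj_swap xs i = xs[i := xs ! Suc i, Suc i := xs ! i]"

definition adj_step :: "nat list \<Rightarrow> nat list \<Rightarrow> bool" where
  "adj_step xs ys \<longleftrightarrow> (\<exists>i. Suc i < length xs \<and> ys = adj_swap xs i)"

definition kendall_dist :: "nat list \<Rightarrow> nat list \<Rightarrow> nat" where
  "kendall_dist s p = (LEAST k. (adj_step ^^ k) s p)"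

text \<open>sigma o (1,2): exchange the values 1 and 2.\<close>
definition swap12 :: "nat list \<Rightarrow> nat list" where
  "swap12 s = map (\<lambda>v. if v = 1 then 2 else if v = 2 then 1 else v) s"

definition ball_K :: "nat \<Rightarrow> nat list \<Rightarrow> nat \<Rightarrow> nat list set" where
  "ball_K n c r = {p \<in> Sn n. kendall_dist c p \<le> r}"

definition is_anticode :: "nat \<Rightarrow> nat \<Rightarrow> nat list set \<Rightarrow> bool" where
  "is_anticode n D A \<longleftrightarrow> A \<subseteq> Sn n \<and> (\<forall>x\<in>A. \<forall>y\<in>A. kendall_dist x y \<le> D)"

definition is_optimal_anticode :: "nat \<Rightarrow> nat \<Rightarrow> nat list set \<Rightarrow> bool" where
  "is_optimal_anticode n D A \<longleftrightarrow> is_anticode n D A \<and>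
     (\<forall>B. is_anticode n D B \<longrightarrow> card B \<le> card A)"

end

theory Submission
  imports Defs
begin

lemma adj_swap_length[simp]: "length (adj_swap xs i) = length xs"
  by (simp add: adj_swap_def)

lemma adj_swap_nth: "Suc i < length xs \<Longrightarrow> j < length xs \<Longrightarrow>
  adj_swap xs i ! j = (if j = i then xs ! Suc i else if j = Suc i then xs ! i else xs ! j)"
  by (auto simp: adj_swap_def nth_list_update)

lemma adj_swap_set[simp]: "Suc i < length xs \<Longrightarrow> set (adj_swap xs i) = set xs"
  by (simp add: adj_swap_def)

lemma adj_swap_distinct[simp]: "Suc i < length xs \<Longrightarrow> distinct (adj_swap xs i) = distinct xs"
  by (simp add: adj_swap_def)

lemma adj_swap_invol: "Suc i < length xs \<Longrightarrow> adj_swap (adj_swap xs i) i = xs"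
  by (rule nth_equalityI) (auto simp: adj_swap_nth)

lemma adj_step_sym: "adj_step xs ys \<Longrightarrow> adj_step ys xs"
  unfolding adj_step_def by (metis adj_swap_invol adj_swap_length)

lemma adj_step_length: "adj_step xs ys \<Longrightarrow> length ys = length xs"
  unfolding adj_step_def by auto

lemma adj_step_perm: "adj_step xs ys \<Longrightarrow> set ys = set xs \<and> distinct ys = distinct xs"
  unfolding adj_step_def by auto

lemma relpow_adj_perm: "(adj_step ^^ m) xs ys \<Longrightarrow> set ys = set xs \<and> distinct ys = distinct xs \<and> length ys = length xs"
proof (induction m arbitrary: ys)
  case 0 then show ?case by simp
next
  case (Suc m)
  then obtain z where "(adj_step ^^ m) xs z" "adj_step z ys" by auto
  then show ?case using Suc.IH adj_step_perm adj_step_length by metis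
qed

lemma relpow_adj_sym: "(adj_step ^^ m) xs ys \<Longrightarrow> (adj_step ^^ m) ys xs"
proof (induction m arbitrary: ys)
  case 0 then show ?case by simp
next
  case (Suc m)
  then obtain z where "(adj_step ^^ m) xs z" "adj_step z ys" by auto
  then show ?case using Suc.IH adj_step_sym by (metis relpowp_Suc_I2)
qed

definition reach :: "nat \<Rightarrow> nat list \<Rightarrow> nat list \<Rightarrow> bool" where
  "reach k x y \<longleftrightarrow> (\<exists>m\<le>k. (adj_step ^^ m) x y)"

lemma reach_refl: "reach k x x"
  unfolding reach_def by (rule exI[of _ 0]) simp

lemma reach_step: "adj_step x y \<Longrightarrow> reach 1 x y"
  unfolding reach_def by (rule exI[of _ 1]) auto

lemma reach_sym: "reach k x y \<Longrightarrow> reach k y x"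
  unfolding reach_def using relpow_adj_sym by blast

lemma reach_trans: "reach k x y \<Longrightarrow> reach l y z \<Longrightarrow> reach (k+l) x z"
  unfolding reach_def
proof (elim exE conjE)
  fix m m' assume "m \<le> k" "(adj_step ^^ m) x y" "m' \<le> l" "(adj_step ^^ m') y z"
  then have "(adj_step ^^ (m + m')) x z" by (metis relpowp_add relcomppI)
  then show "\<exists>m\<le>k + l. (adj_step ^^ m) x z" using \<open>m \<le> k\<close> \<open>m' \<le> l\<close> by (intro exI[of _ "m+m'"]) auto
qed

lemma reach_kendall: "reach k x y \<Longrightarrow> kendall_dist x y \<le> k"
  unfolding reach_def kendall_dist_def by (meson Least_le le_trans)

lemma reach_mono: "reach k x y \<Longrightarrow> k \<le> l \<Longrightarrow> reach l x y"
  unfolding reach_def using le_trans by blast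

lemma adj_step_cons: "adj_step xs ys \<Longrightarrow> adj_step (a#xs) (a#ys)"
  unfolding adj_step_def
proof (elim exE conjE)
  fix i assume "Suc i < length xs" "ys = adj_swap xs i"
  then show "\<exists>i. Suc i < length (a # xs) \<and> a # ys = adj_swap (a # xs) i"
    by (intro exI[of _ "Suc i"]) (auto simp: adj_swap_def)
qed

lemma rtranclp_adj_cons: "adj_step\<^sup>*\<^sup>* xs ys \<Longrightarrow> adj_step\<^sup>*\<^sup>* (a#xs) (a#ys)"
  by (induction rule: rtranclp_induct) (auto intro: rtranclp.rtrancl_into_rtrancl adj_step_cons)

lemma move_front: "adj_step\<^sup>*\<^sup>* (as @ y # bs) (y # as @ bs)"
proof (induction as arbitrary: bs rule: rev_induct)
  case Nil then show ?case by simp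
next
  case (snoc a as)
  have "adj_step (as @ a # y # bs) (as @ y # a # bs)"
    unfolding adj_step_def
    by (intro exI[of _ "length as"]) (auto simp: adj_swap_def list_update_append nth_append)
  then have "adj_step\<^sup>*\<^sup>* ((as @ [a]) @ y # bs) (as @ y # a # bs)" by simp
  also have "adj_step\<^sup>*\<^sup>* \<dots> (y # as @ a # bs)" using snoc.IH by blast
  finally show ?case by simp
qed

lemma connected: "distinct xs \<Longrightarrow> distinct ys \<Longrightarrow> set xs = set ys \<Longrightarrow> adj_step\<^sup>*\<^sup>* xs ys"
proof (induction ys arbitrary: xs)
  case Nil then show ?case by simp
next
  case (Cons y ys)
  then have "y \<in> set xs" by auto
  then obtain as bs where xs: "xs = as @ y # bs" by (meson split_list)
  have "adj_step\<^sup>*\<^sup>* xs (y # as @ bs)" using xs move_front by simp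
  moreover have "adj_step\<^sup>*\<^sup>* (as @ bs) ys"
  proof (intro Cons.IH)
    show "distinct (as @ bs)" using Cons.prems xs by auto
    show "distinct ys" using Cons.prems by simp
    have "set (as @ bs) = set xs - {y}" using Cons.prems xs by auto
    also have "\<dots> = set ys" using Cons.prems by auto
    finally show "set (as @ bs) = set ys" .
  qed
  ultimately show ?case using rtranclp_adj_cons rtranclp_trans by metis
qed

lemma kendall_path: "distinct xs \<Longrightarrow> distinct ys \<Longrightarrow> set xs = set ys \<Longrightarrow> (adj_step ^^ kendall_dist xs ys) xs ys"
  unfolding kendall_dist_def
  by (rule LeastI_ex) (meson connected rtranclp_imp_relpowp)

definition before :: "nat list \<Rightarrow> nat \<Rightarrow> nat \<Rightarrow> bool" where
  "before x u v \<longleftrightarrow> (\<exists>i j. i < j \<and> j < length x \<and> x ! i = u \<and> x ! j = v)"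

lemma before_idx: "distinct x \<Longrightarrow> p < length x \<Longrightarrow> q < length x \<Longrightarrow> before x (x!p) (x!q) \<longleftrightarrow> p < q"
  unfolding before_def
  by (metis nth_eq_iff_index_eq order.strict_trans)

lemma before_set: "before x u v \<Longrightarrow> u \<in> set x \<and> v \<in> set x"
  unfolding before_def by auto

lemma before_irrefl: "distinct x \<Longrightarrow> \<not> before x u u"
  unfolding before_def by (metis nat_neq_iff nth_eq_iff_index_eq order.strict_trans)

lemma before_asym: "distinct x \<Longrightarrow> before x u v \<Longrightarrow> \<not> before x v u"
  unfolding before_def by (metis not_less_iff_gr_or_eq nth_eq_iff_index_eq order.strict_trans)

lemma before_trans: "distinct x \<Longrightarrow> before x u v \<Longrightarrow> before x v w \<Longrightarrow> before x u w"
  unfolding before_def by (metis nth_eq_iff_index_eq order.strict_trans)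

lemma before_total: "u \<in> set x \<Longrightarrow> v \<in> set x \<Longrightarrow> u \<noteq> v \<Longrightarrow> before x u v \<or> before x v u"
  unfolding before_def in_set_conv_nth by (metis nat_neq_iff)

lemma before_swap:
  assumes d: "distinct x" and k: "Suc k < length x"
  shows "before (adj_swap x k) u v \<longleftrightarrow>
    (before x u v \<and> \<not> (u = x!k \<and> v = x!Suc k)) \<or> (u = x!Suc k \<and> v = x!k)"
proof (cases "u \<in> set x \<and> v \<in> set x")
  case False
  have "\<not> before (adj_swap x k) u v" using False before_set k by fastforce
  moreover have "\<not> before x u v" using False before_set by blast
  moreover have "x!k \<in> set x" "x!Suc k \<in> set x" using k by auto
  ultimately show ?thesis using False by blast
next
  case True
  then obtain p q where pq: "p < length x" "q < length x" "u = x!p" "v = x!q"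
    by (auto simp: in_set_conv_nth)
  define t where "t = (\<lambda>i::nat. if i = k then Suc k else if i = Suc k then k else i)"
  have tl: "i < length x \<Longrightarrow> t i < length x" for i using k by (auto simp: t_def)
  have tt: "t (t i) = i" for i by (auto simp: t_def)
  have nth': "i < length x \<Longrightarrow> adj_swap x k ! i = x ! (t i)" for i
    using k by (auto simp: adj_swap_nth t_def)
  have d': "distinct (adj_swap x k)" using d k by simp
  have u': "u = adj_swap x k ! t p" and v': "v = adj_swap x k ! t q"
    using pq nth' tl tt by metis+
  have "before (adj_swap x k) u v \<longleftrightarrow> t p < t q"
    using before_idx[OF d', of "t p" "t q"] u' v' tl pq by simp
  moreover have "before x u v \<longleftrightarrow> p < q" using before_idx[OF d] pq by simp
  moreover have "(u = x!k \<longleftrightarrow> p = k)" "(v = x!Suc k \<longleftrightarrow> q = Suc k)"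
      "(u = x!Suc k \<longleftrightarrow> p = Suc k)" "(v = x!k \<longleftrightarrow> q = k)"
    using pq k d by (auto simp: nth_eq_iff_index_eq)
  moreover have "t p < t q \<longleftrightarrow> (p < q \<and> \<not>(p = k \<and> q = Suc k)) \<or> (p = Suc k \<and> q = k)"
    by (auto simp: t_def)
  ultimately show ?thesis by simp
qed

definition J :: "nat list \<Rightarrow> nat list \<Rightarrow> (nat \<times> nat) set" where
  "J r x = {(i,j). i < j \<and> j < length r \<and> before x (r!j) (r!i)}"

definition sd :: "'a set \<Rightarrow> 'a set \<Rightarrow> 'a set" where
  "sd A B = (A - B) \<union> (B - A)"

lemma J_sub: "J r x \<subseteq> {..<length r} \<times> {..<length r}"
  unfolding J_def by auto

lemma finite_J[simp]: "finite (J r x)"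
  using J_sub finite_subset by blast

lemma J_self: "distinct r \<Longrightarrow> J r r = {}"
  unfolding J_def using before_idx by auto

lemma J_swap:
  assumes r: "distinct r" and x: "distinct x" "set x = set r" and k: "Suc k < length x"
  shows "\<exists>p. J r (adj_swap x k) = sd (J r x) {p}"
proof -
  have "x!k \<in> set x" "x!Suc k \<in> set x" using k by simp_all
  then have "x!k \<in> set r" "x!Suc k \<in> set r" using x(2) by blast+
  then obtain a b where ab: "a < length r" "b < length r" "r!a = x!k" "r!b = x!Suc k"
    by (metis in_set_conv_nth)
  have "x!k \<noteq> x!Suc k" using x(1) k by (simp add: nth_eq_iff_index_eq)
  then have "a \<noteq> b" using ab by auto
  let ?p = "(min a b, max a b)"
  have "J r (adj_swap x k) = sd (J r x) {?p}"
  proof (rule set_eqI)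
    fix z show "z \<in> J r (adj_swap x k) \<longleftrightarrow> z \<in> sd (J r x) {?p}"
    proof (cases z)
      case (Pair i j)
      have e1: "(r!j = x!k \<and> r!i = x!Suc k) \<longleftrightarrow> (j = a \<and> i = b)" if "i < length r" "j < length r"
        using that ab r by (metis nth_eq_iff_index_eq)
      have e2: "(r!j = x!Suc k \<and> r!i = x!k) \<longleftrightarrow> (j = b \<and> i = a)" if "i < length r" "j < length r"
        using that ab r by (metis nth_eq_iff_index_eq)
      have bx: "before x (x!k) (x!Suc k)" using before_idx[OF x(1), of k "Suc k"] k by simp
      have bx': "\<not> before x (x!Suc k) (x!k)" using before_asym[OF x(1) bx] .
      show ?thesis
      proof (cases "i < j \<and> j < length r")
        case False
        then have "z \<notin> J r (adj_swap x k)" "z \<notin> J r x" using Pair unfolding J_def by auto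
        moreover have "z \<noteq> ?p" using False Pair ab \<open>a \<noteq> b\<close> by auto
        ultimately show ?thesis unfolding sd_def by auto
      next
        case True
        have iff: "z \<in> J r (adj_swap x k) \<longleftrightarrow> (before x (r!j) (r!i) \<and> \<not> (j = a \<and> i = b)) \<or> (j = b \<and> i = a)"
          using True Pair e1 e2 unfolding J_def before_swap[OF x(1) k] by auto
        have iff2: "z \<in> J r x \<longleftrightarrow> before x (r!j) (r!i)" using True Pair unfolding J_def by auto
        show ?thesis
        proof (cases "z = ?p")
          case True
          then have "(i = a \<and> j = b) \<or> (i = b \<and> j = a)" using Pair by (auto simp: min_def max_def split: if_splits)
          then show ?thesis
          proof
            assume "i = a \<and> j = b" then show ?thesis using iff iff2 True ab bx' \<open>a \<noteq> b\<close> unfolding sd_def by auto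
          next
            assume "i = b \<and> j = a" then show ?thesis using iff iff2 True ab bx \<open>a \<noteq> b\<close> unfolding sd_def by auto
          qed
        next
          case False
          then have "\<not> (j = a \<and> i = b)" "\<not> (j = b \<and> i = a)" using Pair \<open>i < j \<and> j < length r\<close> by (auto simp: min_def max_def)
          then show ?thesis using iff iff2 False unfolding sd_def by auto
        qed
      qed
    qed
  qed
  then show ?thesis by blast
qed

lemma card_sd_single: "finite S \<Longrightarrow> card (sd S {p}) = (if p \<in> S then card S - 1 else card S + 1)"
  unfolding sd_def by (auto simp: card_insert_if insert_absorb)

lemma sd_assoc_single: "sd (sd A B) {p} = sd A (sd B {p})"
  unfolding sd_def by auto

lemma card_sd_parity: "finite A \<Longrightarrow> finite B \<Longrightarrow> card (sd A B) + 2 * card (A \<inter> B) = card A + card B"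
proof -
  assume f: "finite A" "finite B"
  have "card (sd A B) = card (A - B) + card (B - A)"
    unfolding sd_def using f by (intro card_Un_disjoint) auto
  moreover have "card A = card (A \<inter> B) + card (A - B)" using f(1) by (rule card_Int_Diff)
  moreover have "card B = card (B \<inter> A) + card (B - A)" using f(2) by (rule card_Int_Diff)
  moreover have "B \<inter> A = A \<inter> B" by blast
  ultimately show ?thesis by simp
qed

lemma path_bound:
  assumes "(adj_step ^^ m) x y" "distinct r" "distinct x" "set x = set r"
  shows "card (sd (J r x) (J r y)) \<le> m \<and> even (card (sd (J r x) (J r y)) + m)"
  using assms(1)
proof (induction m arbitrary: y)
  case 0 then show ?case by (simp add: sd_def)
next
  case (Suc m)
  then obtain z where z: "(adj_step ^^ m) x z" "adj_step z y" by auto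
  then obtain k where k: "Suc k < length z" "y = adj_swap z k" unfolding adj_step_def by auto
  have zp: "set z = set r" "distinct z" using relpow_adj_perm[OF z(1)] assms by auto
  obtain p where p: "J r y = sd (J r z) {p}" using J_swap[OF assms(2) zp(2) zp(1) k(1)] k by auto
  have eq: "sd (J r x) (J r y) = sd (sd (J r x) (J r z)) {p}" unfolding p sd_assoc_single ..
  have fin: "finite (sd (J r x) (J r z))" unfolding sd_def by simp
  have "card (sd (J r x) (J r y)) = (if p \<in> sd (J r x) (J r z) then card (sd (J r x) (J r z)) - 1 else card (sd (J r x) (J r z)) + 1)"
    unfolding eq by (rule card_sd_single[OF fin])
  moreover have "p \<in> sd (J r x) (J r z) \<Longrightarrow> card (sd (J r x) (J r z)) > 0"
    using fin card_gt_0_iff by blast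
  ultimately show ?case using Suc.IH[OF z(1)] by auto
qed

lemma before_Cons: "before (a#xs) u v \<longleftrightarrow> (u = a \<and> v \<in> set xs) \<or> before xs u v"
proof
  assume "before (a#xs) u v"
  then obtain i j where ij: "i < j" "j < length (a#xs)" "(a#xs)!i = u" "(a#xs)!j = v"
    unfolding before_def by blast
  show "(u = a \<and> v \<in> set xs) \<or> before xs u v"
  proof (cases i)
    case 0 then show ?thesis using ij by (cases j) auto
  next
    case (Suc i')
    then obtain j' where "j = Suc j'" using ij by (cases j) auto
    then show ?thesis using ij Suc unfolding before_def by auto
  qed
next
  assume "(u = a \<and> v \<in> set xs) \<or> before xs u v"
  then show "before (a#xs) u v"
  proof
    assume "u = a \<and> v \<in> set xs"
    then obtain j where "j < length xs" "xs!j = v" by (auto simp: in_set_conv_nth)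
    then show ?thesis using \<open>u = a \<and> v \<in> set xs\<close> unfolding before_def
      by (intro exI[of _ 0] exI[of _ "Suc j"]) auto
  next
    assume "before xs u v"
    then obtain i j where "i < j" "j < length xs" "xs!i = u" "xs!j = v" unfolding before_def by blast
    then show ?thesis unfolding before_def by (intro exI[of _ "Suc i"] exI[of _ "Suc j"]) auto
  qed
qed

lemma same_before_eq:
  "distinct x \<Longrightarrow> distinct y \<Longrightarrow> set x = set y \<Longrightarrow> (\<forall>u v. before x u v \<longleftrightarrow> before y u v) \<Longrightarrow> x = y"
proof (induction x arbitrary: y)
  case Nil then show ?case by simp
next
  case (Cons a x)
  then obtain b y' where y: "y = b # y'" by (cases y) auto
  have "a = b"
  proof (rule ccontr)
    assume "a \<noteq> b"
    then have "b \<in> set x" using Cons.prems y by auto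
    then have "before (a#x) a b" using before_Cons by simp
    then have "before y a b" using Cons.prems by simp
    then have "b \<in> set y'" using y before_Cons before_set \<open>a \<noteq> b\<close> by auto
    then show False using Cons.prems y by simp
  qed
  moreover have "x = y'"
  proof (rule Cons.IH)
    show "distinct x" "distinct y'" using Cons.prems y by auto
    show "set x = set y'" using Cons.prems y \<open>a = b\<close> by auto
    show "\<forall>u v. before x u v \<longleftrightarrow> before y' u v"
    proof (intro allI)
      fix u v
      show "before x u v \<longleftrightarrow> before y' u v"
      proof (cases "u = a \<or> v = a")
        case True
        then have "\<not> before x u v" "\<not> before y' u v"
          using before_set Cons.prems y \<open>a = b\<close> by auto
        then show ?thesis by simp
      next
        case False
        then show ?thesis using Cons.prems(4) y \<open>a = b\<close> before_Cons by metis
      qed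
    qed
  qed
  ultimately show ?case using y by simp
qed

lemma J_inj:
  assumes r: "distinct r" and x: "distinct x" "set x = set r" and y: "distinct y" "set y = set r"
    and e: "J r x = J r y"
  shows "x = y"
proof (rule same_before_eq[OF x(1) y(1)])
  show "set x = set y" using x y by simp
  show "\<forall>u v. before x u v \<longleftrightarrow> before y u v"
  proof (intro allI)
    fix u v
    show "before x u v \<longleftrightarrow> before y u v"
    proof (cases "u \<in> set r \<and> v \<in> set r")
      case False then show ?thesis using before_set x y by blast
    next
      case True
      then obtain i j where ij: "i < length r" "j < length r" "r!i = u" "r!j = v"
        by (auto simp: in_set_conv_nth)
      consider "i < j" | "i = j" | "j < i" by linarith
      then show ?thesis
      proof cases
        case 1
        have "(i,j) \<in> J r x \<longleftrightarrow> (i,j) \<in> J r y" using e by simp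
        then have "before x v u \<longleftrightarrow> before y v u" using 1 ij unfolding J_def by auto
        moreover have "u \<noteq> v" using 1 ij r by (auto simp: nth_eq_iff_index_eq)
        ultimately show ?thesis using before_total before_asym x y True by metis
      next
        case 2 then show ?thesis using ij before_irrefl x y by simp
      next
        case 3
        have "(j,i) \<in> J r x \<longleftrightarrow> (j,i) \<in> J r y" using e by simp
        then show ?thesis using 3 ij unfolding J_def by auto
      qed
    qed
  qed
qed

definition valid :: "nat \<Rightarrow> (nat \<times> nat) set \<Rightarrow> bool" where
  "valid n S \<longleftrightarrow> S \<subseteq> {(i,j). i < j \<and> j < n} \<and>
     (\<forall>i j k. i < j \<longrightarrow> j < k \<longrightarrow> k < n \<longrightarrow> (i,j) \<in> S \<longrightarrow> (j,k) \<in> S \<longrightarrow> (i,k) \<in> S) \<and>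
     (\<forall>i j k. i < j \<longrightarrow> j < k \<longrightarrow> k < n \<longrightarrow> (i,k) \<in> S \<longrightarrow> (i,j) \<in> S \<or> (j,k) \<in> S)"

lemma J_valid:
  assumes r: "distinct r" and x: "distinct x" "set x = set r"
  shows "valid (length r) (J r x)"
  unfolding valid_def
proof (intro conjI allI impI)
  show "J r x \<subseteq> {(i,j). i < j \<and> j < length r}" unfolding J_def by auto
next
  fix i j k assume "i < j" "j < k" "k < length r" "(i,j) \<in> J r x" "(j,k) \<in> J r x"
  then show "(i,k) \<in> J r x" unfolding J_def using before_trans x by auto
next
  fix i j k assume ijk: "i < j" "j < k" "k < length r" "(i,k) \<in> J r x"
  show "(i,j) \<in> J r x \<or> (j,k) \<in> J r x"
  proof (rule ccontr)
    assume "\<not> ((i,j) \<in> J r x \<or> (j,k) \<in> J r x)"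
    then have n: "\<not> before x (r!j) (r!i)" "\<not> before x (r!k) (r!j)" using ijk unfolding J_def by auto
    have ne: "r!i \<noteq> r!j" "r!j \<noteq> r!k" using ijk r by (auto simp: nth_eq_iff_index_eq)
    have s: "r!i \<in> set x" "r!j \<in> set x" "r!k \<in> set x" using ijk x by auto
    have "before x (r!i) (r!j)" "before x (r!j) (r!k)" using before_total n ne s by metis+
    then have "before x (r!i) (r!k)" using before_trans x by blast
    moreover have "before x (r!k) (r!i)" using ijk unfolding J_def by auto
    ultimately show False using before_asym x by blast
  qed
qed

lemma validD0: "valid n S \<Longrightarrow> (i,j) \<in> S \<Longrightarrow> i < j \<and> j < n"
  unfolding valid_def by blast
lemma validD1: "valid n S \<Longrightarrow> i < j \<Longrightarrow> j < k \<Longrightarrow> k < n \<Longrightarrow> (i,j) \<in> S \<Longrightarrow> (j,k) \<in> S \<Longrightarrow> (i,k) \<in> S"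
  unfolding valid_def by blast
lemma validD2: "valid n S \<Longrightarrow> i < j \<Longrightarrow> j < k \<Longrightarrow> k < n \<Longrightarrow> (i,k) \<in> S \<Longrightarrow> (i,j) \<in> S \<or> (j,k) \<in> S"
  unfolding valid_def by blast

lemma partner_nonadj:
  assumes V: "valid n {(u,v),q}" and uv: "Suc u < v" and ne: "q \<noteq> (u,v)"
  shows "q = (u, Suc u) \<or> q = (Suc u, v)"
proof -
  have "v < n" using validD0[OF V, of u v] by simp
  then have "(u, Suc u) \<in> {(u,v),q} \<or> (Suc u, v) \<in> {(u,v),q}"
    using validD2[OF V, of u "Suc u" v] uv by simp
  then show ?thesis using uv by auto
qed

lemma partner_adj:
  assumes V: "valid n {(u,Suc u),(a,b)}" and ne: "(a,b) \<noteq> (u,Suc u)"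
  shows "a < b \<and> b < n \<and> a \<noteq> Suc u \<and> (a = u \<longrightarrow> b = Suc (Suc u)) \<and> (Suc a = u \<longrightarrow> b = Suc u)
     \<and> (a \<noteq> u \<and> Suc a \<noteq> u \<longrightarrow> b = Suc a)"
proof -
  let ?S = "{(u,Suc u),(a,b)}"
  have ab: "a < b" "b < n" using validD0[OF V, of a b] by auto
  have un: "Suc u < n" using validD0[OF V, of u "Suc u"] by auto
  have C1: "a \<noteq> Suc u"
  proof
    assume "a = Suc u"
    then have "(u,b) \<in> ?S" using validD1[OF V, of u "Suc u" b] ab by simp
    then show False using ab \<open>a = Suc u\<close> by auto
  qed
  have C2: "b = Suc (Suc u)" if "a = u"
  proof (rule ccontr)
    assume "b \<noteq> Suc (Suc u)"
    then have "Suc (Suc u) < b" using that ne ab by auto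
    then have "(u, Suc (Suc u)) \<in> ?S \<or> (Suc (Suc u), b) \<in> ?S"
      using validD2[OF V, of u "Suc (Suc u)" b] ab that by simp
    then show False using that \<open>b \<noteq> Suc (Suc u)\<close> by auto
  qed
  have C3: "b = Suc u" if h: "Suc a = u"
  proof (rule ccontr)
    assume nb: "b \<noteq> Suc u"
    have "b = u \<or> Suc u < b" using ab h nb by linarith
    then show False
    proof (elim disjE)
      assume 1: "b = u"
      then have "(a, Suc u) \<in> ?S" using validD1[OF V, of a u "Suc u"] h un by simp
      then show False using h 1 by auto
    next
      assume 2: "Suc u < b"
      then have "(a, u) \<in> ?S \<or> (u, b) \<in> ?S" using validD2[OF V, of a u b] h ab by simp
      then show False using h 2 by auto
    qed
  qed
  have C4: "b = Suc a" if "a \<noteq> u" "Suc a \<noteq> u"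
  proof (rule ccontr)
    assume "b \<noteq> Suc a"
    then have "Suc a < b" using ab by auto
    then have "(a, Suc a) \<in> ?S \<or> (Suc a, b) \<in> ?S" using validD2[OF V, of a "Suc a" b] ab by simp
    then show False using that \<open>b \<noteq> Suc a\<close> by auto
  qed
  show ?thesis using ab C1 C2 C3 C4 by blast
qed

definition partners :: "nat \<Rightarrow> nat \<times> nat \<Rightarrow> (nat \<times> nat) set" where
  "partners n p = {q. q \<noteq> p \<and> valid n {p,q}}"

lemma partners_sub: "partners n p \<subseteq> {..<n} \<times> {..<n}"
  unfolding partners_def using validD0 by fastforce

lemma finite_partners: "finite (partners n p)"
  by (rule finite_subset[OF partners_sub]) simp

lemma partners_card:
  assumes n: "4 \<le> n" and p: "fst p < snd p" "snd p < n"
  shows "card (partners n p) \<le> n - 2"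
proof -
  obtain u v where uv: "p = (u,v)" by (cases p)
  show ?thesis
  proof (cases "v = Suc u")
    case False
    then have "Suc u < v" using p uv by auto
    then have "partners n p \<subseteq> {(u, Suc u), (Suc u, v)}"
      unfolding partners_def uv using partner_nonadj by blast
    then have "card (partners n p) \<le> card {(u, Suc u), (Suc u, v)}" by (intro card_mono) auto
    also have "\<dots> \<le> 2" by (simp add: card_insert_if)
    finally show ?thesis using n by linarith
  next
    case True
    define g where "g = (\<lambda>a. if a = u then Suc (Suc u) else if Suc a = u then Suc u else Suc a)"
    define w where "w = (if Suc u < n - 1 then Suc u else u)"
    have sub: "partners n p \<subseteq> (\<lambda>a. (a, g a)) ` ({..<n-1} - {w})"
    proof
      fix q assume "q \<in> partners n p"
      then obtain a b where q: "q = (a,b)" "(a,b) \<noteq> (u, Suc u)" "valid n {(u,Suc u),(a,b)}"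
        unfolding partners_def uv True by (cases q) auto
      note P = partner_adj[OF q(3) q(2)]
      have "b = g a" using P unfolding g_def by auto
      moreover have "a \<in> {..<n-1} - {w}" using P unfolding w_def by auto
      ultimately show "q \<in> (\<lambda>a. (a, g a)) ` ({..<n-1} - {w})" using q by auto
    qed
    have "card (partners n p) \<le> card ((\<lambda>a. (a, g a)) ` ({..<n-1} - {w}))" using sub by (intro card_mono) auto
    also have "\<dots> \<le> card ({..<n-1} - {w})" by (rule card_image_le) simp
    also have "\<dots> = n - 2"
    proof -
      have "w < n - 1" using p uv True unfolding w_def by auto
      then show ?thesis by (simp add: card_Diff_singleton)
    qed
    finally show ?thesis .
  qed
qed

lemma valid_sym: "valid n {p,q} = valid n {q,p}"
  by (simp add: insert_commute)

lemma triangle_adj: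
  assumes "valid n {a,b}" "valid n {a,c}" "valid n {b,c}" "a \<noteq> b" "a \<noteq> c" "b \<noteq> c"
  shows "snd a = Suc (fst a)"
proof (rule ccontr)
  obtain u v where a: "a = (u,v)" by (cases a)
  assume "snd a \<noteq> Suc (fst a)"
  moreover have "u < v" using validD0[OF assms(1), of u v] a by simp
  ultimately have uv: "Suc u < v" using a by auto
  have vn: "v < n" using validD0[OF assms(1), of u v] a by simp
  have "b = (u, Suc u) \<or> b = (Suc u, v)" using partner_nonadj[of n u v b] assms(1,4) uv a by auto
  moreover have "c = (u, Suc u) \<or> c = (Suc u, v)" using partner_nonadj[of n u v c] assms(2,5) uv a by auto
  ultimately have bc: "{b,c} = {(u, Suc u), (Suc u, v)}" using assms(6) by auto
  have "(u,v) \<in> {b,c}" using validD1[OF assms(3), of u "Suc u" v] uv vn bc by simp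
  then show False using bc uv by auto
qed

lemma adj_far:
  assumes "valid n {(i, Suc i), (j, Suc j)}" "i \<noteq> j"
  shows "j \<noteq> Suc i"
  using partner_adj[OF assms(1)] assms(2) by auto

lemma triangle:
  assumes "valid n {a,b}" "valid n {a,c}" "valid n {b,c}" "a \<noteq> b" "a \<noteq> c" "b \<noteq> c"
  shows "6 \<le> n"
proof -
  have va: "snd a = Suc (fst a)" using triangle_adj assms by blast
  have vb: "snd b = Suc (fst b)" using triangle_adj[of n b a c] assms valid_sym by metis
  have vc: "snd c = Suc (fst c)" using triangle_adj[of n c a b] assms valid_sym by metis
  obtain i j k where ijk: "a = (i, Suc i)" "b = (j, Suc j)" "c = (k, Suc k)"
    using va vb vc by (metis prod.collapse)
  have d: "i \<noteq> j" "i \<noteq> k" "j \<noteq> k" using assms ijk by auto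
  have "j \<noteq> Suc i" "i \<noteq> Suc j" using adj_far assms(1) ijk d valid_sym by metis+
  moreover have "k \<noteq> Suc i" "i \<noteq> Suc k" using adj_far assms(2) ijk d valid_sym by metis+
  moreover have "k \<noteq> Suc j" "j \<noteq> Suc k" using adj_far assms(3) ijk d valid_sym by metis+
  moreover have "Suc i < n" "Suc j < n" "Suc k < n"
    using validD0[OF assms(1), of i "Suc i"] validD0[OF assms(1), of j "Suc j"] validD0[OF assms(2), of k "Suc k"] ijk by auto
  ultimately show ?thesis using d by linarith
qed

lemma card2_eq: "card S = 2 \<Longrightarrow> x \<in> S \<Longrightarrow> y \<in> S \<Longrightarrow> x \<noteq> y \<Longrightarrow> S = {x,y}"
proof -
  assume h: "card S = 2" "x \<in> S" "y \<in> S" "x \<noteq> y"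
  then have f: "finite S" by (intro card_ge_0_finite) simp
  have "{x,y} \<subseteq> S" "card {x,y} = card S" using h by auto
  then show ?thesis using card_subset_eq[OF f] by blast
qed

lemma card2_other: "card S = 2 \<Longrightarrow> a \<in> S \<Longrightarrow> \<exists>b. b \<in> S \<and> b \<noteq> a \<and> S = {a,b}"
proof -
  assume h: "card S = 2" "a \<in> S"
  then obtain x y where xy: "S = {x,y}" "x \<noteq> y" by (auto simp: card_2_iff)
  show ?thesis
  proof (cases "x = a")
    case True then show ?thesis using xy by (intro exI[of _ y]) auto
  next
    case False then have "y = a" using xy h by auto
    then show ?thesis using xy by (intro exI[of _ x]) auto
  qed
qed

lemma int1_other: "card (S \<inter> {x,y}) = 1 \<Longrightarrow> x \<notin> S \<Longrightarrow> y \<in> S"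
proof (rule ccontr)
  assume "card (S \<inter> {x,y}) = 1" "x \<notin> S" "y \<notin> S"
  then have "S \<inter> {x,y} = {}" by blast
  with \<open>card (S \<inter> {x,y}) = 1\<close> show False by simp
qed

lemma card_le3: "card {a,b,c} \<le> (3::nat)"
  by (simp add: card_insert_if)

lemma family_bound:
  assumes n: "4 \<le> n" and fin: "finite F"
    and V: "\<And>S. S \<in> F \<Longrightarrow> valid n S \<and> card S = 2"
    and D: "\<And>S T. S \<in> F \<Longrightarrow> T \<in> F \<Longrightarrow> S \<noteq> T \<Longrightarrow> card (sd S T) = 2"
  shows "card F \<le> n - 2"
proof -
  have finS: "finite S" if "S \<in> F" for S using V[OF that] by (intro card_ge_0_finite) simp
  have I: "card (S \<inter> T) = 1" if "S \<in> F" "T \<in> F" "S \<noteq> T" for S T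
    using card_sd_parity[OF finS[OF that(1)] finS[OF that(2)]] D[OF that] V[OF that(1)] V[OF that(2)] by simp
  show ?thesis
  proof (cases "\<exists>p. \<forall>S\<in>F. p \<in> S")
    case True
    then obtain p where p: "\<forall>S\<in>F. p \<in> S" by blast
    show ?thesis
    proof (cases "F = {}")
      case True then show ?thesis by simp
    next
      case False
      then obtain S0 where S0: "S0 \<in> F" by blast
      have vS0: "valid n S0" using V[OF S0] by simp
      have "p \<in> S0" using p S0 by blast
      then have "(fst p, snd p) \<in> S0" by simp
      then have pr: "fst p < snd p" "snd p < n" using validD0[OF vS0] by blast+
      have "F \<subseteq> (\<lambda>q. {p,q}) ` partners n p"
      proof
        fix S assume S: "S \<in> F"
        have pS: "p \<in> S" using p S by blast
        have cS: "card S = 2" using V[OF S] by simp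
        obtain q where q: "S = {p,q}" "q \<noteq> p" using card2_other[OF cS pS] by auto
        have "q \<in> partners n p" unfolding partners_def using V[OF S] q by simp
        then show "S \<in> (\<lambda>q. {p,q}) ` partners n p" using q(1) by blast
      qed
      then have "card F \<le> card ((\<lambda>q. {p,q}) ` partners n p)"
        using finite_partners by (intro card_mono) auto
      also have "\<dots> \<le> card (partners n p)" by (rule card_image_le) (rule finite_partners)
      also have "\<dots> \<le> n - 2" using partners_card[OF n pr] .
      finally show ?thesis .
    qed
  next
    case False
    show ?thesis
    proof (cases "card F \<le> 2")
      case True then show ?thesis using n by linarith
    next
      case big: False
      then have "\<not> card F \<le> Suc 0" by linarith
      then obtain S1 S2 where S12: "S1 \<in> F" "S2 \<in> F" "S1 \<noteq> S2"
        using card_le_Suc0_iff_eq[OF fin] by blast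
      have "card (S1 \<inter> S2) = Suc 0" using I[OF S12] by simp
      then obtain a where a: "S1 \<inter> S2 = {a}" by (auto simp: card_Suc_eq)
      have "a \<in> S1" "a \<in> S2" using a by auto
      have cS1: "card S1 = 2" using V[OF S12(1)] by simp
      have cS2: "card S2 = 2" using V[OF S12(2)] by simp
      from card2_other[OF cS1 \<open>a \<in> S1\<close>] obtain b where b: "b \<in> S1" "b \<noteq> a" "S1 = {a,b}"
        by blast
      from card2_other[OF cS2 \<open>a \<in> S2\<close>] obtain c where c: "c \<in> S2" "c \<noteq> a" "S2 = {a,c}"
        by blast
      note S1 = b(3)
      note S2 = c(3)
      have bc: "b \<noteq> c"
      proof
        assume "b = c" then have "S1 = S2" using S1 S2 by simp
        then show False using S12(3) by simp
      qed
      obtain S3 where S3: "S3 \<in> F" "a \<notin> S3" using False by blast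
      have s31: "S3 \<noteq> S1"
      proof assume "S3 = S1" with \<open>a \<in> S1\<close> S3(2) show False by simp
      qed
      have s32: "S3 \<noteq> S2"
      proof assume "S3 = S2" with \<open>a \<in> S2\<close> S3(2) show False by simp
      qed
      have c31: "card (S3 \<inter> S1) = 1" using I[OF S3(1) S12(1) s31] by simp
      have c32: "card (S3 \<inter> S2) = 1" using I[OF S3(1) S12(2) s32] by simp
      from c31 have "card (S3 \<inter> {a,b}) = 1" by (simp only: S1)
      then have "b \<in> S3" using S3(2) by (rule int1_other)
      from c32 have "card (S3 \<inter> {a,c}) = 1" by (simp only: S2)
      then have "c \<in> S3" using S3(2) by (rule int1_other)
      note \<open>b \<in> S3\<close> \<open>c \<in> S3\<close>
      then have S3e: "S3 = {b,c}" using card2_eq[of S3 b c] V[OF S3(1)] bc by simp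
      have "F \<subseteq> {S1,S2,S3}"
      proof
        fix S assume S: "S \<in> F"
        show "S \<in> {S1,S2,S3}"
        proof (rule ccontr)
          assume nS: "S \<notin> {S1,S2,S3}"
          then have i1: "card (S \<inter> S1) = 1" and i2: "card (S \<inter> S2) = 1" and i3: "card (S \<inter> S3) = 1"
            using I[OF S S12(1)] I[OF S S12(2)] I[OF S S3(1)] by auto
          show False
          proof (cases "a \<in> S")
            case True
            from i3 have "b \<in> S \<or> c \<in> S" unfolding S3e using int1_other[of S b c] by blast
            then show False
            proof
              assume "b \<in> S" then have "S = S1" using card2_eq[of S a b] V[OF S] True b S1 by simp
              then show False using nS by simp
            next
              assume "c \<in> S" then have "S = S2" using card2_eq[of S a c] V[OF S] True c S2 by simp
              then show False using nS by simp
            qed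
          next
            case False
            from i1 False have "b \<in> S" unfolding S1 using int1_other[of S a b] by blast
            moreover from i2 False have "c \<in> S" unfolding S2 using int1_other[of S a c] by blast
            ultimately have "S = S3" using card2_eq[of S b c] V[OF S] bc S3e by simp
            then show False using nS by simp
          qed
        qed
      qed
      then have "card F \<le> card {S1,S2,S3}" by (intro card_mono) auto
      then have "card F \<le> 3" using card_le3[of S1 S2 S3] by linarith
      moreover have "6 \<le> n"
      proof (rule triangle)
        show "valid n {a,b}" using V[OF S12(1)] S1 by simp
        show "valid n {a,c}" using V[OF S12(2)] S2 by simp
        show "valid n {b,c}" using V[OF S3(1)] S3e by simp
        show "a \<noteq> b" "a \<noteq> c" "b \<noteq> c" using b c bc by auto
      qed
      ultimately show ?thesis by linarith
    qed
  qed
qed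

lemma Sn_D: "x \<in> Sn n \<Longrightarrow> distinct x \<and> set x = {1..n} \<and> length x = n"
  unfolding Sn_def permutations_of_set_def using distinct_card by fastforce

lemma finite_Sn[simp]: "finite (Sn n)"
  unfolding Sn_def by simp

lemma class_bound:
  assumes n: "4 \<le> n" and E: "E \<subseteq> Sn n"
    and H: "\<And>x y r. x \<in> E \<Longrightarrow> y \<in> E \<Longrightarrow> r \<in> Sn n \<Longrightarrow>
             card (sd (J r x) (J r y)) \<le> 3 \<and> even (card (sd (J r x) (J r y)))"
  shows "card E \<le> n - 1"
proof (cases "E = {}")
  case True then show ?thesis by simp
next
  case False
  then obtain x0 where x0: "x0 \<in> E" by blast
  have x0S: "x0 \<in> Sn n" using x0 E by blast
  note x0D = Sn_D[OF x0S]
  have finE: "finite E" using E finite_subset finite_Sn by blast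
  have inj: "inj_on (J x0) E"
  proof (rule inj_onI)
    fix x y assume "x \<in> E" "y \<in> E" "J x0 x = J x0 y"
    then show "x = y" using J_inj[of x0 x y] Sn_D E x0D by (metis subsetD)
  qed
  have J0: "J x0 x0 = {}" using J_self x0D by blast
  have sd0: "sd S {} = S" for S :: "(nat \<times> nat) set" unfolding sd_def by simp
  have sdE: "sd S T = {} \<Longrightarrow> S = T" for S T :: "(nat \<times> nat) set" unfolding sd_def by blast
  let ?F = "J x0 ` (E - {x0})"
  have "card ?F \<le> n - 2"
  proof (rule family_bound[OF n])
    show "finite ?F" using finE by simp
  next
    fix S assume "S \<in> ?F"
    then obtain x where x: "x \<in> E" "x \<noteq> x0" "S = J x0 x" by blast
    have xD: "distinct x" "set x = set x0" using Sn_D x E x0D by (metis subsetD)+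
    have "valid (length x0) S" using J_valid[OF x0D[THEN conjunct1] xD] x by simp
    then show "valid n S \<and> card S = 2"
    proof (intro conjI)
      show "valid n S" using \<open>valid (length x0) S\<close> x0D by simp
      have h: "card (sd (J x0 x) (J x0 x0)) \<le> 3 \<and> even (card (sd (J x0 x) (J x0 x0)))"
        using H[OF x(1) x0 x0S] .
      have "S \<noteq> {}"
      proof
        assume "S = {}"
        then have "J x0 x = J x0 x0" using J0 x by simp
        then show False using inj x x0 by (meson inj_onD)
      qed
      then have "card S \<noteq> 0" using x by simp
      moreover have "card S \<le> 3" "even (card S)" using h J0 sd0 x by simp_all
      ultimately show "card S = 2" by presburger
    qed
  next
    fix S T assume "S \<in> ?F" "T \<in> ?F" "S \<noteq> T"
    then obtain x y where xy: "x \<in> E" "y \<in> E" "S = J x0 x" "T = J x0 y" by blast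
    have h: "card (sd S T) \<le> 3 \<and> even (card (sd S T))" using H[OF xy(1,2) x0S] xy by simp
    have "sd S T \<noteq> {}" using sdE \<open>S \<noteq> T\<close> by blast
    moreover have "finite (sd S T)" using xy unfolding sd_def by simp
    ultimately have "card (sd S T) \<noteq> 0" by simp
    then show "card (sd S T) = 2" using h by presburger
  qed
  moreover have "card ?F = card (E - {x0})"
    using inj by (intro card_image) (auto intro: inj_on_subset)
  moreover have "card E = Suc (card (E - {x0}))"
    using card_Suc_Diff1[OF finE x0] by simp
  ultimately show ?thesis using n by linarith
qed

definition e0 :: "nat \<Rightarrow> nat list" where "e0 n = identity_perm n"

lemma e0_Sn: "e0 n \<in> Sn n"
  unfolding e0_def identity_perm_def Sn_def permutations_of_set_def by auto

lemma anticode_bound: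
  assumes n: "4 \<le> n" and B: "B \<subseteq> Sn n" and D: "\<forall>x\<in>B. \<forall>y\<in>B. kendall_dist x y \<le> 3"
  shows "card B \<le> 2 * (n - 1)"
proof -
  have key: "card (sd (J r x) (J r y)) \<le> 3 \<and> even (card (sd (J r x) (J r y)) + kendall_dist x y)"
    if "x \<in> B" "y \<in> B" "r \<in> Sn n" for x y r
  proof -
    have xD: "distinct x" "set x = {1..n}" using Sn_D that B by blast+
    have yD: "distinct y" "set y = {1..n}" using Sn_D that B by blast+
    have rD: "distinct r" "set r = {1..n}" using Sn_D that by blast+
    have p: "(adj_step ^^ kendall_dist x y) x y" using kendall_path xD yD by simp
    have "card (sd (J r x) (J r y)) \<le> kendall_dist x y \<and> even (card (sd (J r x) (J r y)) + kendall_dist x y)"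
      using path_bound[OF p rD(1) xD(1)] xD rD by simp
    then show ?thesis using D that by fastforce
  qed
  let ?e = "e0 n"
  have par: "even (card X + card Y) \<Longrightarrow> even (card (sd X Y))" if "finite X" "finite Y" for X Y :: "(nat \<times> nat) set"
    using card_sd_parity[OF that] by presburger
  define B0 where "B0 = {x \<in> B. even (card (J ?e x))}"
  define B1 where "B1 = {x \<in> B. odd (card (J ?e x))}"
  have cls: "card (sd (J r x) (J r y)) \<le> 3 \<and> even (card (sd (J r x) (J r y)))"
    if "x \<in> B" "y \<in> B" "r \<in> Sn n" "even (card (J ?e x) + card (J ?e y))" for x y r
  proof -
    have "even (card (sd (J ?e x) (J ?e y)))" using par that(4) by simp
    then have "even (kendall_dist x y)" using key[OF that(1,2) e0_Sn] by presburger
    then show ?thesis using key[OF that(1-3)] by presburger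
  qed
  have "card B0 \<le> n - 1"
    by (rule class_bound[OF n]) (use B cls in \<open>auto simp: B0_def\<close>)
  moreover have "card B1 \<le> n - 1"
    by (rule class_bound[OF n]) (use B cls in \<open>auto simp: B1_def\<close>)
  moreover have "B = B0 \<union> B1" unfolding B0_def B1_def by blast
  then have "card B \<le> card B0 + card B1" using card_Un_le[of B0 B1] by simp
  ultimately show ?thesis by linarith
qed

lemma e0_len[simp]: "length (e0 n) = n"
  by (simp add: e0_def identity_perm_def)

lemma e0_nth: "j < n \<Longrightarrow> e0 n ! j = Suc j"
  by (simp add: e0_def identity_perm_def nth_upt del: upt_Suc)

lemma adj_e0_nth: "Suc i < n \<Longrightarrow> j < n \<Longrightarrow>
   adj_swap (e0 n) i ! j = (if j = i then Suc (Suc i) else if j = Suc i then Suc i else Suc j)"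
  by (simp add: adj_swap_nth e0_nth)

lemma adj_swap_map: "Suc i < length x \<Longrightarrow> adj_swap (map f x) i = map f (adj_swap x i)"
  by (rule nth_equalityI) (auto simp: adj_swap_nth)

lemma adj_step_map: "adj_step x y \<Longrightarrow> adj_step (map f x) (map f y)"
  unfolding adj_step_def using adj_swap_map by fastforce

lemma relpow_map: "(adj_step ^^ m) x y \<Longrightarrow> (adj_step ^^ m) (map f x) (map f y)"
proof (induction m arbitrary: y)
  case 0 then show ?case by simp
next
  case (Suc m)
  then obtain z where "(adj_step ^^ m) x z" "adj_step z y" by auto
  then show ?case using Suc.IH adj_step_map by (metis relpowp_Suc_I)
qed

definition sw :: "nat \<Rightarrow> nat" where "sw v = (if v = 1 then 2 else if v = 2 then 1 else v)"

lemma swap12_sw: "swap12 s = map sw s"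
  unfolding swap12_def sw_def ..

lemma sw_sw[simp]: "sw (sw v) = v" by (simp add: sw_def)

lemma swap12_invol[simp]: "swap12 (swap12 s) = s"
  by (simp add: swap12_sw comp_def)

lemma swap12_inj: "swap12 x = swap12 y \<Longrightarrow> x = y"
  by (metis swap12_invol)

lemma reach_swap12: "reach k x y \<Longrightarrow> reach k (swap12 x) (swap12 y)"
  unfolding reach_def swap12_sw using relpow_map by blast

lemma swap12_Sn: assumes "2 \<le> n" "x \<in> Sn n" shows "swap12 x \<in> Sn n"
proof -
  have x: "distinct x" "set x = {1..n}" using Sn_D assms by blast+
  have inj: "inj_on sw (set x)" by (metis inj_onI sw_sw)
  have "sw ` {1..n} = {1..n}"
  proof
    show "sw ` {1..n} \<subseteq> {1..n}" using assms(1) by (auto simp: sw_def)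
    show "{1..n} \<subseteq> sw ` {1..n}"
    proof
      fix v assume "v \<in> {1..n}"
      then have "sw v \<in> {1..n}" using assms(1) by (auto simp: sw_def)
      then show "v \<in> sw ` {1..n}" by (metis image_eqI sw_sw)
    qed
  qed
  then show ?thesis unfolding swap12_sw Sn_def permutations_of_set_def
    using x inj by (simp add: distinct_map)
qed

lemma swap12_e0: "2 \<le> n \<Longrightarrow> swap12 (e0 n) = adj_swap (e0 n) 0"
  by (rule nth_equalityI) (auto simp: swap12_sw adj_e0_nth e0_nth sw_def)

lemma adj_e0_Sn: "Suc i < n \<Longrightarrow> adj_swap (e0 n) i \<in> Sn n"
  using e0_Sn[of n] unfolding Sn_def permutations_of_set_def by auto

lemma step_e0: "Suc i < n \<Longrightarrow> adj_step (e0 n) (adj_swap (e0 n) i)"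
  unfolding adj_step_def by auto

lemma ball_reach: "p \<in> ball_K n (e0 n) 1 \<Longrightarrow> p \<in> Sn n \<and> reach 1 (e0 n) p"
proof -
  assume p: "p \<in> ball_K n (e0 n) 1"
  then have pS: "p \<in> Sn n" and k: "kendall_dist (e0 n) p \<le> 1" unfolding ball_K_def by auto
  have "(adj_step ^^ kendall_dist (e0 n) p) (e0 n) p"
    using kendall_path Sn_D[OF pS] Sn_D[OF e0_Sn[of n]] by simp
  then show ?thesis using pS k unfolding reach_def by blast
qed

lemma reach_ball: "p \<in> Sn n \<Longrightarrow> reach 1 (e0 n) p \<Longrightarrow> p \<in> ball_K n (e0 n) 1"
  unfolding ball_K_def using reach_kendall by blast

lemma A_props:
  assumes n: "4 \<le> n" and x: "x \<in> ball_K n (e0 n) 1 \<union> swap12 ` ball_K n (e0 n) 1"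
  shows "x \<in> Sn n \<and> (reach 1 (e0 n) x \<or> reach 1 (adj_swap (e0 n) 0) x)"
  using x
proof
  assume "x \<in> ball_K n (e0 n) 1" then show ?thesis using ball_reach by blast
next
  assume "x \<in> swap12 ` ball_K n (e0 n) 1"
  then obtain p where p: "p \<in> ball_K n (e0 n) 1" "x = swap12 p" by blast
  have "p \<in> Sn n" "reach 1 (e0 n) p" using ball_reach p by blast+
  then show ?thesis using p swap12_Sn[of n p] reach_swap12 swap12_e0 n by fastforce
qed

lemma e0_eq: "e0 n = identity_perm n" by (simp add: e0_def)

lemma A_anticode:
  assumes n: "4 \<le> n"
  shows "is_anticode n 3 (ball_K n (e0 n) 1 \<union> swap12 ` ball_K n (e0 n) 1)"
  unfolding is_anticode_def
proof (intro conjI ballI subsetI)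
  let ?A = "ball_K n (e0 n) 1 \<union> swap12 ` ball_K n (e0 n) 1"
  fix x assume "x \<in> ?A" then show "x \<in> Sn n" using A_props[OF n] by blast
next
  let ?A = "ball_K n (e0 n) 1 \<union> swap12 ` ball_K n (e0 n) 1"
  let ?s = "adj_swap (e0 n) 0"
  fix x y assume xy: "x \<in> ?A" "y \<in> ?A"
  have es: "reach 1 (e0 n) ?s" using step_e0[of 0 n] n reach_step by simp
  have c: "\<exists>c1 c2. reach 1 x c1 \<and> reach 1 c1 c2 \<and> reach 1 c2 y"
  proof -
    obtain c1 where c1: "reach 1 c1 x" "c1 = e0 n \<or> c1 = ?s" using A_props[OF n xy(1)] by blast
    obtain c2 where c2: "reach 1 c2 y" "c2 = e0 n \<or> c2 = ?s" using A_props[OF n xy(2)] by blast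
    have "reach 1 c1 c2" using c1(2) c2(2) es reach_sym reach_refl by metis
    then show ?thesis using c1 c2 reach_sym by blast
  qed
  then obtain c1 c2 where "reach 1 x c1" "reach 1 c1 c2" "reach 1 c2 y" by blast
  then have "reach (1+1+1) x y" using reach_trans by blast
  then have "kendall_dist x y \<le> 1+1+1" by (rule reach_kendall)
  then show "kendall_dist x y \<le> 3" by simp
qed

lemma A_card_ge:
  assumes n: "4 \<le> n"
  shows "2 * (n - 1) \<le> card (ball_K n (e0 n) 1 \<union> swap12 ` ball_K n (e0 n) 1)"
proof -
  let ?A = "ball_K n (e0 n) 1 \<union> swap12 ` ball_K n (e0 n) 1"
  let ?e = "e0 n"
  define G1 where "G1 = (\<lambda>i. adj_swap ?e i) ` {..<n-1}"
  define G2 where "G2 = (\<lambda>i. swap12 (adj_swap ?e i)) ` {1..<n-1}"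
  have inj1: "inj_on (\<lambda>i. adj_swap ?e i) {..<n-1}"
  proof (rule inj_onI)
    fix i j assume ij: "i \<in> {..<n-1}" "j \<in> {..<n-1}" "adj_swap ?e i = adj_swap ?e j"
    then have "adj_swap ?e i ! i = adj_swap ?e j ! i" by simp
    moreover have "Suc i < n" "Suc j < n" using ij by auto
    ultimately show "i = j" using adj_e0_nth[of i n i] adj_e0_nth[of j n i] by (auto split: if_splits)
  qed
  have inj2: "inj_on (\<lambda>i. swap12 (adj_swap ?e i)) {1..<n-1}"
    using inj1 swap12_inj by (auto simp: inj_on_def)
  have ne1: "?e \<notin> G1"
  proof
    assume "?e \<in> G1"
    then obtain i where i: "i < n - 1" "?e = adj_swap ?e i" unfolding G1_def by auto
    have "?e ! i = adj_swap ?e i ! i" using arg_cong[OF i(2), of "\<lambda>l. l ! i"] .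
    moreover have "Suc i < n" using i by auto
    ultimately show False using adj_e0_nth[of i n i] e0_nth[of i n] by simp
  qed
  have z0: "swap12 (adj_swap ?e i) ! 0 = 2" if "1 \<le> i" "i < n - 1" for i
    using that n by (simp add: swap12_sw adj_e0_nth sw_def)
  have ne2: "?e \<notin> G2"
  proof
    assume "?e \<in> G2"
    then obtain i where i: "1 \<le> i" "i < n - 1" "?e = swap12 (adj_swap ?e i)" unfolding G2_def by auto
    then have "?e ! 0 = 2" using z0[OF i(1,2)] by metis
    then show False using n by (simp add: e0_nth)
  qed
  have d12: "G1 \<inter> G2 = {}"
  proof (rule ccontr)
    assume "G1 \<inter> G2 \<noteq> {}"
    then obtain i j where ij: "j < n - 1" "1 \<le> i" "i < n - 1" "adj_swap ?e j = swap12 (adj_swap ?e i)"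
      unfolding G1_def G2_def by auto
    then have "adj_swap ?e j ! 0 = 2" using z0[OF ij(2,3)] by metis
    moreover have "Suc j < n" "0 < n" using ij(1) n by auto
    ultimately have "j = 0" using adj_e0_nth[of j n 0] by (auto split: if_splits)
    then have "swap12 ?e = swap12 (adj_swap ?e i)" using ij swap12_e0 n by simp
    then have "?e = adj_swap ?e i" using swap12_inj by blast
    have "?e ! i = adj_swap ?e i ! i" using arg_cong[OF \<open>?e = adj_swap ?e i\<close>, of "\<lambda>l. l ! i"] .
    moreover have "Suc i < n" using ij by auto
    ultimately show False using adj_e0_nth[of i n i] e0_nth[of i n] by simp
  qed
  have sub: "insert ?e (G1 \<union> G2) \<subseteq> ?A"
  proof -
    have "?e \<in> ball_K n ?e 1" using reach_ball[OF e0_Sn reach_refl] .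
    moreover have "G1 \<subseteq> ball_K n ?e 1"
      unfolding G1_def using reach_ball adj_e0_Sn step_e0 reach_step by auto
    moreover have "G2 \<subseteq> swap12 ` ball_K n ?e 1"
      unfolding G2_def using reach_ball adj_e0_Sn step_e0 reach_step by auto
    ultimately show ?thesis by blast
  qed
  have finA: "finite ?A" using A_anticode[OF n] finite_subset finite_Sn unfolding is_anticode_def by blast
  have "card G1 = n - 1" unfolding G1_def using card_image[OF inj1] by simp
  moreover have "card G2 = n - 2" unfolding G2_def using card_image[OF inj2] by simp
  moreover have "card (insert ?e (G1 \<union> G2)) = Suc (card G1 + card G2)"
    using ne1 ne2 d12 unfolding G1_def G2_def by (simp add: card_Un_disjoint)
  moreover have "card (insert ?e (G1 \<union> G2)) \<le> card ?A" using card_mono[OF finA sub] .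
  ultimately show ?thesis using n by linarith
qed

theorem theorem7:
  fixes n :: nat
  assumes "n \<ge> 4"
  defines "A \<equiv> ball_K n (identity_perm n) 1 \<union> swap12 ` ball_K n (identity_perm n) 1"
  shows "is_optimal_anticode n 3 A \<and> card A = 2 * (n - 1)"
proof -
  have AA: "A = ball_K n (e0 n) 1 \<union> swap12 ` ball_K n (e0 n) 1" unfolding A_def e0_def ..
  have anti: "is_anticode n 3 A" unfolding AA using A_anticode[OF assms(1)] .
  have up: "card B \<le> 2 * (n - 1)" if "is_anticode n 3 B" for B
    using anticode_bound[OF assms(1)] that unfolding is_anticode_def by blast
  have "card A = 2 * (n - 1)" using up[OF anti] A_card_ge[OF assms(1)] AA by simp
  then show ?thesis using anti up unfolding is_optimal_anticode_def by simp
qed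

end
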